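(* Let $P(\theta,z)=(\theta+\alpha,p_\theta(z))$ be a fibred polynomial dynamics over an irrational rotation, and let $\Gamma\subset\mathbb{T}^1\times\mathbb{C}$ be an attracting invariant $n$-curve for $P$. Then there exists an open set $\mathcal{T}\subset\mathbb{T}^1\times\mathbb{C}$ containing $\Gamma$ such that every point of $\mathcal{T}$ is attracted to $\Gamma$, i.e. for every $(\theta,z)\in\mathcal{T}$, $\operatorname{dist}(P^k(\theta,z),\Gamma)\to0$ as $k\to\infty$. Moreover, for every $\theta\in\mathbb{T}^1$, the fiber $\mathcal{T}_\theta=\{z:(\theta,z)\in\mathcal{T}\}$ consists of $n$ components, each of which contains a point of $\Gamma_\theta=\{z:(\theta,z)\in\Gamma\}$.
   Context: $\mathbb{T}^1=\mathbb{R}/\mathbb{Z}$, $\langle x\rangle$ is the fractional part. A fibred polynomial dynamics over an irrational rotation is a continuous map $P(\theta,z)=(\theta+\alpha,p_\theta(z))$ on $\mathbb{T}^1\times\mathbb{C}$ with $\alpha$ irrational and $p_\theta$ a polynomial whose coefficients depend continuously on $\theta$. An $n$-curve is a set $\Gamma=\{(\langle n\theta\rangle,\tilde\gamma(\theta)):\theta\in\mathbb{T}^1\}$ with $\tilde\gamma:\mathbb{T}^1\to\mathbb{C}$ continuous and injective (an unfolding of $\Gamma$). $\Gamma$ is an invariant $n$-curve for $P$ if for some unfolding $\tilde\gamma$ and some $\tau\in\{0,\dots,n-1\}$, $p_{\langle n\theta\rangle}(\tilde\gamma(\theta))=\tilde\gamma(\theta+\tfrac{\alpha+\tau}{n})$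 for all $\theta$ (i.e. $\tilde\gamma$ is an invariant curve of the lifting $\tilde P_\tau(\theta,z)=(\theta+\frac{\alpha+\tau}{n},p_{\langle n\theta\rangle}(z))$ of $P$ under $(\theta,z)\mapsto(\langle n\theta\rangle,z)$). It is attracting if $\exp\big(\int_{\mathbb{T}^1}\log|p'_{\langle n\theta\rangle}(\tilde\gamma(\theta))|\,d\theta\big)<1$ (with the integrand in $L^1$). *)

theory Defs
  imports "HOL-Analysis.Analysis" "HOL-Computational_Algebra.Polynomial"
begin

text \<open>The circle T^1 = R/Z is represented through its universal cover R:
  functions on T^1 are 1-periodic functions on R, and subsets of T^1 x C are
  subsets of R x C that are invariant under (theta,z) -> (theta+1,z).
  Open sets / distances in T^1 x C correspond to open sets / distances of the
  lifted (periodic) sets in R x C.\<close>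

definition fibred_poly_dynamics :: "real \<Rightarrow> (real \<Rightarrow> complex poly) \<Rightarrow> bool" where
  "fibred_poly_dynamics \<alpha> p \<longleftrightarrow>
     \<alpha> \<notin> \<rat> \<and>
     (\<forall>\<theta>. p (\<theta> + 1) = p \<theta>) \<and>
     (\<exists>d. \<forall>\<theta>. degree (p \<theta>) \<le> d) \<and>
     (\<forall>i. continuous_on UNIV (\<lambda>\<theta>. coeff (p \<theta>) i))"

definition fibred_map :: "real \<Rightarrow> (real \<Rightarrow> complex poly) \<Rightarrow> real \<times> complex \<Rightarrow> real \<times> complex" where
  "fibred_map \<alpha> p x = (fst x + \<alpha>, poly (p (fst x)) (snd x))"

definition is_unfolding :: "(real \<Rightarrow> complex) \<Rightarrow> bool" where
  "is_unfolding \<gamma> \<longleftrightarrow> continuous_on UNIV \<gamma> \<and> (\<forall>t. \<gamma> (t + 1) = \<gamma> t) \<and>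
     (\<forall>s t. \<gamma> s = \<gamma> t \<longrightarrow> s - t \<in> \<int>)"

text \<open>Lift to R x C of the n-curve {(<n theta>, gamma theta)}.\<close>
definition ncurve :: "nat \<Rightarrow> (real \<Rightarrow> complex) \<Rightarrow> (real \<times> complex) set" where
  "ncurve n \<gamma> = {(x, \<gamma> t) | x t. x - real n * t \<in> \<int>}"

definition attracting_invariant_ncurve ::
  "real \<Rightarrow> (real \<Rightarrow> complex poly) \<Rightarrow> nat \<Rightarrow> (real \<times> complex) set \<Rightarrow> bool" where
  "attracting_invariant_ncurve \<alpha> p n \<Gamma> \<longleftrightarrow> n \<ge> 1 \<and>
     (\<exists>\<gamma> \<tau>. is_unfolding \<gamma> \<and> \<Gamma> = ncurve n \<gamma> \<and> \<tau> < n \<and>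
       (\<forall>t. poly (p (frac (real n * t))) (\<gamma> t) = \<gamma> (t + (\<alpha> + real \<tau>) / real n)) \<and>
       (AE t in lebesgue_on {0..1}. poly (pderiv (p (frac (real n * t)))) (\<gamma> t) \<noteq> 0) \<and>
       integrable (lebesgue_on {0..1}) (\<lambda>t. ln (cmod (poly (pderiv (p (frac (real n * t)))) (\<gamma> t)))) \<and>
       exp (integral\<^sup>L (lebesgue_on {0..1}) (\<lambda>t. ln (cmod (poly (pderiv (p (frac (real n * t)))) (\<gamma> t))))) < 1)"

end

theory Submission
  imports Defs
begin
lemma periodic_int:
  fixes f :: "real \<Rightarrow> 'a"
  assumes "\<And>x. f (x + 1) = f x"
  shows "f (x + real_of_int k) = f x"
proof -
  have nat: "f (y + real m) = f y" for y m
  proof (induction m arbitrary: y)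
    case 0 then show ?case by simp
  next
    case (Suc m)
    have "f (y + real (Suc m)) = f (y + real m + 1)" by (simp add: algebra_simps)
    also have "\<dots> = f y" using assms Suc by simp
    finally show ?case .
  qed
  show ?thesis
  proof (cases "k \<ge> 0")
    case True
    then obtain m where "k = int m" by (metis nonneg_eq_int)
    then show ?thesis using nat by simp
  next
    case False
    define m where "m = nat (-k)"
    have m: "k = - int m" using False by (simp add: m_def)
    have "f (x + real_of_int k) = f (x + real_of_int k + real m)" using nat by simp
    also have "\<dots> = f x" using m by simp
    finally show ?thesis .
  qed
qed

lemma periodic_Ints:
  fixes f :: "real \<Rightarrow> 'a"
  assumes "\<And>x. f (x + 1) = f x" "c \<in> \<int>"
  shows "f (x + c) = f x"
  using assms(2) periodic_int[of f, OF assms(1)] by (auto elim: Ints_cases)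

lemma periodic_frac:
  fixes f :: "real \<Rightarrow> 'a"
  assumes "\<And>x. f (x + 1) = f x"
  shows "f (frac x) = f x"
proof -
  have "f (frac x + real_of_int (floor x)) = f (frac x)" by (rule periodic_int[of f, OF assms])
  then show ?thesis by (simp add: frac_def)
qed

lemma periodic_integral:
  fixes g :: "real \<Rightarrow> real"
  assumes cont: "continuous_on UNIV g" and per: "\<And>x. g (x + 1) = g x"
  shows "integral {t..t+1} g = integral {0..1} g"
proof -
  define m where "m = floor t"
  define u where "u = t - m"
  have u: "0 \<le> u" "u \<le> 1" using m_def u_def by linarith+
  have intg: "\<And>a b. g integrable_on {a..b}"
    by (intro integrable_continuous_interval continuous_on_subset[OF cont]) auto
  have gm: "g \<circ> (+) (real_of_int m) = g"
    by (rule ext) (simp add: periodic_int[of g, OF per] add.commute)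
  have g1: "g \<circ> (+) 1 = g"
    by (rule ext) (simp add: per add.commute)
  have "integral {t..t+1} g = integral {u + m..u + 1 + m} g" using u_def by simp
  also have "\<dots> = integral {u..u+1} (g \<circ> (+) (real_of_int m))"
    by (rule integral_shift_Icc_real[symmetric])
  also have "\<dots> = integral {u..u+1} g" using gm by simp
  also have "\<dots> = integral {u..1} g + integral {1..u+1} g"
    using Henstock_Kurzweil_Integration.integral_combine[where a=u and c=1 and b="u+1" and f=g] u
    using intg by simp
  also have "integral {1..u+1} g = integral {0+1..u+1} g" by simp
  also have "\<dots> = integral {0..u} (g \<circ> (+) 1)"
    by (rule integral_shift_Icc_real[symmetric])
  also have "\<dots> = integral {0..u} g" using g1 by simp
  also have "integral {u..1} g + integral {0..u} g = integral {0..1} g"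
    using Henstock_Kurzweil_Integration.integral_combine[where a=0 and c=u and b=1 and f=g] u
    using intg by simp
  finally show ?thesis .
qed

lemma periodic_bounded:
  fixes g :: "real \<Rightarrow> 'a::real_normed_vector"
  assumes cont: "continuous_on UNIV g" and per: "\<And>x. g (x + 1) = g x"
  shows "\<exists>M. \<forall>x. norm (g x) \<le> M"
proof -
  have "compact (g ` {0..1})"
    by (rule compact_continuous_image) (auto intro: continuous_on_subset[OF cont])
  then obtain M where M: "\<And>y. y \<in> g ` {0..1} \<Longrightarrow> norm y \<le> M"
    using compact_imp_bounded bounded_iff by metis
  have "norm (g x) \<le> M" for x
  proof -
    have "g x = g (frac x)" using periodic_frac[of g, OF per] by simp
    moreover have "frac x \<in> {0..1}" using frac_lt_1[of x] frac_ge_0[of x] by auto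
    ultimately show ?thesis using M by auto
  qed
  then show ?thesis by blast
qed

lemma periodic_unif_cont:
  fixes g :: "real \<Rightarrow> 'a::real_normed_vector"
  assumes cont: "continuous_on UNIV g" and per: "\<And>x. g (x + 1) = g x" and e: "e > 0"
  shows "\<exists>d>0. \<forall>x y. \<bar>x - y\<bar> < d \<longrightarrow> dist (g x) (g y) < e"
proof -
  have "uniformly_continuous_on {-1..2} g"
    by (rule compact_uniformly_continuous) (auto intro: continuous_on_subset[OF cont])
  then obtain d0 where d0: "d0 > 0" "\<And>x x'. x \<in> {-1..2} \<Longrightarrow> x' \<in> {-1..2} \<Longrightarrow> dist x' x < d0 \<Longrightarrow> dist (g x') (g x) < e"
    using uniformly_continuous_onE e by metis
  define d where "d = min d0 1"
  have "dist (g x) (g y) < e" if "\<bar>x - y\<bar> < d" for x y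
  proof -
    define k where "k = floor x"
    have gx: "g x = g (x - k)" using periodic_int[of g, OF per, of "x - k" k] by simp
    have gy: "g y = g (y - k)" using periodic_int[of g, OF per, of "y - k" k] by simp
    have "x - k \<in> {-1..2}" "y - k \<in> {-1..2}" "dist (x - k) (y - k) < d0"
      using that k_def d_def by (auto simp: dist_real_def) linarith+
    then show ?thesis using d0(2) gx gy by metis
  qed
  moreover have "d > 0" using d0 d_def by simp
  ultimately show ?thesis by blast
qed

lemma riemann_step:
  fixes g :: "real \<Rightarrow> real"
  assumes cont: "continuous_on UNIV g" and h: "h \<ge> 0"
    and le: "\<And>y. y \<in> {x..x+h} \<Longrightarrow> g x \<le> g y + e"
  shows "h * g x \<le> integral {x..x+h} g + h * e"
proof -
  have le': "\<And>y. y \<in> {x..x+h} \<Longrightarrow> g x - e \<le> g y" using le by force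
  have "integral {x..x+h} (\<lambda>y. g x - e) \<le> integral {x..x+h} g"
    by (rule integral_le) (auto intro!: integrable_continuous_interval continuous_on_subset[OF cont] le')
  then show ?thesis using h by (simp add: algebra_simps)
qed

lemma integral_sum_steps:
  fixes g :: "real \<Rightarrow> real"
  assumes cont: "continuous_on UNIV g" and h: "h \<ge> 0"
  shows "(\<Sum>m<L. integral {x + real m * h..x + real m * h + h} g) = integral {x..x + real L * h} g"
proof (induction L)
  case 0 then show ?case by simp
next
  case (Suc L)
  have intg: "\<And>a b. g integrable_on {a..b}"
    by (intro integrable_continuous_interval continuous_on_subset[OF cont]) auto
  have "integral {x..x + real L * h} g + integral {x + real L * h..x + real L * h + h} g
        = integral {x..x + real L * h + h} g"
    using Henstock_Kurzweil_Integration.integral_combine[where a=x and c="x + real L * h" and b="x + real L * h + h" and f=g] h intg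
    by simp
  then show ?case using Suc by (simp add: algebra_simps)
qed

lemma riemann_sum_bound:
  fixes g :: "real \<Rightarrow> real" and L :: nat
  assumes cont: "continuous_on UNIV g" and per: "\<And>x. g (x + 1) = g x"
    and M: "\<And>x. \<bar>g x\<bar> \<le> M"
    and uc: "\<And>x y. \<bar>x - y\<bar> \<le> h \<Longrightarrow> g x \<le> g y + e" and e: "e \<ge> 0"
    and h: "0 < h" "real L * h \<le> 1" "1 - real L * h \<le> h"
  shows "h * (\<Sum>m<L. g (x + real m * h)) \<le> integral {0..1} g + h * M + e"
proof -
  have intg: "\<And>a b. g integrable_on {a..b}"
    by (intro integrable_continuous_interval continuous_on_subset[OF cont]) auto
  have step: "h * g (x + real m * h) \<le> integral {x + real m * h..x + real m * h + h} g + h * e" for m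
    by (rule riemann_step[OF cont]) (use h in \<open>auto intro!: uc\<close>)
  have "h * (\<Sum>m<L. g (x + real m * h)) = (\<Sum>m<L. h * g (x + real m * h))"
    by (simp add: sum_distrib_left)
  also have "\<dots> \<le> (\<Sum>m<L. integral {x + real m * h..x + real m * h + h} g + h * e)"
    by (rule sum_mono) (rule step)
  also have "\<dots> = integral {x..x + real L * h} g + real L * h * e"
    using integral_sum_steps[OF cont, where h=h and L=L and x=x] h by (simp add: sum.distrib)
  finally have 1: "h * (\<Sum>m<L. g (x + real m * h)) \<le> integral {x..x + real L * h} g + real L * h * e" .
  have 2: "integral {x..x + real L * h} g + integral {x + real L * h..x + 1} g = integral {x..x+1} g"
    using Henstock_Kurzweil_Integration.integral_combine[where a=x and c="x + real L * h" and b="x + 1" and f=g] h intg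
    by (simp add: zero_le_mult_iff)
  have M0: "M \<ge> 0" using M[of 0] by simp
  have 3: "norm (integral {x + real L * h..x + 1} g) \<le> M * ((x + 1) - (x + real L * h))"
    by (rule integral_bound) (use h M in \<open>auto intro: continuous_on_subset[OF cont]\<close>)
  have 4: "M * ((x + 1) - (x + real L * h)) \<le> M * h" using h M0 by (intro mult_left_mono) auto
  have 5: "real L * h * e \<le> e" using h e by (simp add: mult_left_le_one_le)
  have 6: "integral {x..x+1} g = integral {0..1} g" by (rule periodic_integral[OF cont per])
  from 1 2 3 4 5 6 show ?thesis by (simp add: algebra_simps)
qed

lemma birkhoff_neg:
  fixes g :: "real \<Rightarrow> real" and \<omega> :: real
  assumes cont: "continuous_on UNIV g" and per: "\<And>x. g (x + 1) = g x"
    and irr: "\<omega> \<notin> \<rat>" and neg: "integral {0..1} g < 0"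
  shows "\<exists>N>0. \<forall>t. (\<Sum>k<N. g (t + real k * \<omega>)) < 0"
proof -
  define I where "I = integral {0..1} g"
  define \<eta> where "\<eta> = - I"
  have \<eta>: "\<eta> > 0" using neg I_def \<eta>_def by simp
  obtain M where M: "\<And>x. \<bar>g x\<bar> \<le> M" using periodic_bounded[OF cont per] by auto
  have M0: "M \<ge> 0" using M[of 0] by simp
  obtain d where d: "d > 0" "\<And>x y. \<bar>x - y\<bar> < d \<Longrightarrow> dist (g x) (g y) < \<eta>/4"
    using periodic_unif_cont[OF cont per, of "\<eta>/4"] \<eta> by auto
  define h0 where "h0 = min (d/2) (min (\<eta>/(4*(M+1))) (1/2))"
  have h0: "h0 > 0" using d \<eta> M0 h0_def by simp
  obtain n0 where n0: "inverse (real (Suc n0)) < h0" using reals_Archimedean[OF h0] by blast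
  obtain q and pf :: "nat \<Rightarrow> int" where qp0: "0 < q" "q \<le> int (Suc n0 ^ 1)" "\<And>i. i < 1 \<Longrightarrow> \<bar>of_int q * (\<lambda>_. \<omega>) i - of_int (pf i)\<bar> < 1 / real (Suc n0)"
    by (rule Dirichlet_approx_simult[where N="Suc n0" and \<theta>="\<lambda>_. \<omega>" and n=1]) auto
  have qp: "0 < q" "\<bar>of_int q * \<omega> - of_int (pf 0)\<bar> < 1 / real (Suc n0)"
    using qp0 by auto
  define qq where "qq = nat q"
  define pp where "pp = pf 0"
  define s where "s = real qq * \<omega> - real_of_int pp"
  have qq: "qq > 0" "real qq = real_of_int q" using qp(1) qq_def by auto
  have s_small: "\<bar>s\<bar> < h0" using qp(2) n0 qq s_def pp_def by (simp add: divide_inverse)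
  have s_nz: "s \<noteq> 0"
  proof
    assume "s = 0"
    then have "\<omega> = real_of_int pp / real qq" using qq s_def by (simp add: field_simps)
    then have "\<omega> \<in> \<rat>" by simp
    then show False using irr by simp
  qed
  define h where "h = \<bar>s\<bar>"
  have h: "h > 0" "h < h0" using s_nz s_small h_def by auto
  define L where "L = nat (floor (1/h))"
  have fl: "floor (1/h) \<ge> 1" using h h0_def by (simp add: le_floor_iff field_simps)
  have fl0: "floor (1/h) \<ge> 0" using fl by linarith
  have L_eq: "real L = of_int (floor (1/h))" unfolding L_def using fl0 by (rule of_nat_nat)
  have L1: "real L * h \<le> 1" using L_eq h
    by (metis floor_le_iff le_divide_eq_1 less_eq_real_def not_le of_int_floor_le pos_le_divide_eq)
  have L2: "1 - real L * h \<le> h"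
  proof -
    have "1/h < real L + 1" using L_eq by linarith
    then have "1 < (real L + 1) * h" using h by (simp add: field_simps)
    then show ?thesis by (simp add: algebra_simps)
  qed
  have L0: "L > 0" using fl L_def by simp
  have uc: "g x \<le> g y + \<eta>/4" if "\<bar>x - y\<bar> \<le> h" for x y
  proof -
    have "\<bar>x - y\<bar> < d" using that h h0_def by simp
    then have "dist (g x) (g y) < \<eta>/4" by (rule d(2))
    then show ?thesis unfolding dist_real_def by arith
  qed
  have inner: "(\<Sum>m<L. g (x + real m * h)) < 0" for x
  proof -
    have "h * (\<Sum>m<L. g (x + real m * h)) \<le> I + h * M + \<eta>/4"
      unfolding I_def by (rule riemann_sum_bound[OF cont per M uc _ h(1) L1 L2]) (use \<eta> in auto)
    moreover have "h * M \<le> \<eta>/4"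
    proof -
      have "h \<le> \<eta>/(4*(M+1))" using h h0_def by simp
      then have "h * (M+1) \<le> \<eta>/4" using M0 by (simp add: field_simps)
      then show ?thesis using h M0 by (simp add: algebra_simps)
    qed
    ultimately have "h * (\<Sum>m<L. g (x + real m * h)) < 0" using \<eta>_def \<eta> by linarith
    then show ?thesis using h by (simp add: mult_less_0_iff)
  qed
  have inner2: "(\<Sum>m<L. g (x + real m * s)) < 0" for x
  proof (cases "s > 0")
    case True
    then show ?thesis using inner[of x] h_def by simp
  next
    case False
    then have sh: "s = - h" using h_def by simp
    have "(\<Sum>m<L. g (x + real m * s)) = (\<Sum>i<L. g (x + real (L - Suc i) * s))"
      by (rule sum.nat_diff_reindex[symmetric])
    also have "\<dots> = (\<Sum>i<L. g ((x - real (L - 1) * h) + real i * h))"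
      by (rule sum.cong) (auto simp: sh of_nat_diff algebra_simps)
    also have "\<dots> < 0" by (rule inner)
    finally show ?thesis .
  qed
  have "(\<Sum>k<L*qq. g (t + real k * \<omega>)) < 0" for t
  proof -
    have "(\<Sum>k<L*qq. g (t + real k * \<omega>)) = (\<Sum>m<L. \<Sum>k\<in>{m*qq..<m*qq+qq}. g (t + real k * \<omega>))"
      by (rule sum.nat_group[symmetric])
    also have "\<dots> = (\<Sum>m<L. \<Sum>r<qq. g (t + real (r + m*qq) * \<omega>))"
    proof (rule sum.cong[OF refl])
      fix m
      show "(\<Sum>k\<in>{m*qq..<m*qq+qq}. g (t + real k * \<omega>)) = (\<Sum>r<qq. g (t + real (r + m*qq) * \<omega>))"
        using sum.shift_bounds_nat_ivl[of "\<lambda>k. g (t + real k * \<omega>)" 0 "m*qq" qq]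
        by (simp add: atLeast0LessThan add.commute)
    qed
    also have "\<dots> = (\<Sum>r<qq. \<Sum>m<L. g (t + real (r + m*qq) * \<omega>))"
      by (rule sum.swap)
    also have "\<dots> = (\<Sum>r<qq. \<Sum>m<L. g ((t + real r * \<omega>) + real m * s))"
    proof (intro sum.cong refl)
      fix r m
      have "t + real (r + m*qq) * \<omega> = ((t + real r * \<omega>) + real m * s) + real_of_int (int m * pp)"
        by (simp add: s_def algebra_simps)
      then show "g (t + real (r + m*qq) * \<omega>) = g ((t + real r * \<omega>) + real m * s)"
        using periodic_int[of g, OF per, of "(t + real r * \<omega>) + real m * s" "int m * pp"] by metis
    qed
    also have "\<dots> < (\<Sum>r<qq. 0)"
      by (rule sum_strict_mono) (use qq inner2 in auto)
    finally show ?thesis by simp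
  qed
  moreover have "L * qq > 0" using L0 qq by simp
  ultimately show ?thesis by blast
qed

lemma poly_sum_bound:
  fixes p :: "'a::comm_ring_1 poly"
  assumes "degree p \<le> d"
  shows "poly p x = (\<Sum>i\<le>d. coeff p i * x ^ i)"
proof -
  have "poly p x = poly (\<Sum>i\<le>d. monom (coeff p i) i) x"
    using poly_as_sum_of_monoms'[OF assms] by simp
  also have "\<dots> = (\<Sum>i\<le>d. coeff p i * x ^ i)" by (simp add: poly_sum poly_monom)
  finally show ?thesis .
qed

lemma poly_joint_cont:
  fixes P :: "real \<Rightarrow> complex poly"
  assumes co: "\<And>i. continuous_on UNIV (\<lambda>t. coeff (P t) i)" and dg: "\<And>t. degree (P t) \<le> d"
  shows "continuous_on UNIV (\<lambda>x. poly (P (fst x)) (snd x))"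
proof -
  have eq: "(\<lambda>x. poly (P (fst x)) (snd x)) = (\<lambda>x. \<Sum>i\<le>d. coeff (P (fst x)) i * snd x ^ i)"
    using poly_sum_bound[OF dg] by auto
  have ci: "continuous_on UNIV (\<lambda>x::real\<times>complex. coeff (P (fst x)) i)" for i
    using continuous_on_compose[OF continuous_on_fst[OF continuous_on_id] continuous_on_subset[OF co[of i]]]
    by (simp add: o_def)
  show ?thesis unfolding eq
    by (intro continuous_intros ci)
qed

lemma pderiv_joint_cont:
  fixes P :: "real \<Rightarrow> complex poly"
  assumes co: "\<And>i. continuous_on UNIV (\<lambda>t. coeff (P t) i)" and dg: "\<And>t. degree (P t) \<le> d"
  shows "continuous_on UNIV (\<lambda>x. poly (pderiv (P (fst x))) (snd x))"
proof (rule poly_joint_cont)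
  fix i show "continuous_on UNIV (\<lambda>t. coeff (pderiv (P t)) i)"
    unfolding coeff_pderiv by (intro continuous_intros co)
next
  fix t show "degree (pderiv (P t)) \<le> d" using dg[of t] by (simp add: degree_pderiv)
qed

lemma div_at_top: "N > 0 \<Longrightarrow> filterlim (\<lambda>k::nat. k div N) at_top sequentially"
  unfolding filterlim_at_top eventually_sequentially
proof (intro allI exI[of _ "Z * N" for Z] impI)
  fix Z k assume "N > 0" "Z * N \<le> k"
  then show "Z \<le> k div N"
    by (metis div_le_mono nonzero_mult_div_cancel_right not_gr_zero)
qed

lemma contraction_seq:
  fixes e a :: "nat \<Rightarrow> real"
  assumes e0: "\<And>k. e k \<ge> 0" and a0: "\<And>k. a k \<ge> 0" and aA: "\<And>k. a k \<le> A" and A1: "A \<ge> 1"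
    and N: "N > 0" and c: "c < 1"
    and prod: "\<And>j. (\<Prod>k<N. a (j + k)) \<le> c"
    and step: "\<And>k. e k \<le> r \<Longrightarrow> e (Suc k) \<le> a k * e k"
    and init: "e 0 \<le> r / A ^ N"
  shows "e \<longlonglongrightarrow> 0"
proof -
  have c0: "c \<ge> 0"
  proof -
    have "0 \<le> (\<Prod>k<N. a (0 + k))" by (rule prod_nonneg) (use a0 in auto)
    then show ?thesis using prod[of 0] by linarith
  qed
  have AN: "A ^ N \<ge> 1" using A1 by simp
  have block: "e (j + i) \<le> (\<Prod>k<i. a (j + k)) * e j" if ej: "e j \<le> r / A ^ N" and "i \<le> N" for j i
    using \<open>i \<le> N\<close>
  proof (induction i)
    case 0 then show ?case by simp
  next
    case (Suc i)
    then have IH: "e (j + i) \<le> (\<Prod>k<i. a (j + k)) * e j" by simp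
    have P: "(\<Prod>k<i. a (j + k)) \<le> A ^ i"
      using prod_mono[of "{..<i}" "\<lambda>k. a (j + k)" "\<lambda>_. A"] a0 aA by simp
    have "(\<Prod>k<i. a (j + k)) * e j \<le> A ^ i * e j" using P e0 by (simp add: mult_right_mono)
    also have "\<dots> \<le> A ^ N * e j" using A1 Suc.prems e0[of j] by (intro mult_right_mono power_increasing) auto
    also have "\<dots> \<le> r" using ej AN by (simp add: field_simps)
    finally have "e (j + i) \<le> r" using IH by linarith
    then have "e (Suc (j + i)) \<le> a (j + i) * e (j + i)" by (rule step)
    also have "\<dots> \<le> a (j + i) * ((\<Prod>k<i. a (j + k)) * e j)" using IH a0 by (simp add: mult_left_mono)
    also have "\<dots> = (\<Prod>k<Suc i. a (j + k)) * e j" by (simp add: algebra_simps)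
    finally show ?case by simp
  qed
  have pm: "(\<Prod>k<i. a (j + k)) \<le> A ^ N" if "i \<le> N" for i j
  proof -
    have "(\<Prod>k<i. a (j + k)) \<le> A ^ i"
      using prod_mono[of "{..<i}" "\<lambda>k. a (j + k)" "\<lambda>_. A"] a0 aA by simp
    also have "\<dots> \<le> A ^ N" using A1 that by (intro power_increasing) auto
    finally show ?thesis .
  qed
  have em: "e (m * N) \<le> c ^ m * e 0" for m
  proof (induction m)
    case 0 then show ?case by simp
  next
    case (Suc m)
    have cm: "c ^ m \<le> 1" using c0 c by (simp add: power_le_one)
    have "e (m * N) \<le> e 0" using Suc cm e0[of 0] by (metis mult_left_le_one_le order_trans c0 zero_le_power)
    then have ej: "e (m * N) \<le> r / A ^ N" using init by linarith
    have "e (m * N + N) \<le> (\<Prod>k<N. a (m * N + k)) * e (m * N)" by (rule block[OF ej]) simp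
    also have "\<dots> \<le> c * e (m * N)" using prod e0 by (simp add: mult_right_mono)
    also have "\<dots> \<le> c * (c ^ m * e 0)" using Suc c0 by (simp add: mult_left_mono)
    finally show ?case by (simp add: algebra_simps)
  qed
  have bound: "e k \<le> A ^ N * e 0 * c ^ (k div N)" for k
  proof -
    define m where "m = k div N"
    define i where "i = k mod N"
    have k: "k = m * N + i" using m_def i_def by simp
    have iN: "i \<le> N" using i_def N by simp
    have cm: "c ^ m \<le> 1" using c0 c by (simp add: power_le_one)
    have "e (m * N) \<le> e 0" using em[of m] cm e0[of 0] by (metis mult_left_le_one_le order_trans c0 zero_le_power)
    then have ej: "e (m * N) \<le> r / A ^ N" using init by linarith
    have "e k \<le> (\<Prod>j<i. a (m * N + j)) * e (m * N)" using block[OF ej iN] k by simp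
    also have "\<dots> \<le> A ^ N * e (m * N)" using pm[OF iN] e0 by (simp add: mult_right_mono)
    also have "\<dots> \<le> A ^ N * (c ^ m * e 0)" using em[of m] AN by (simp add: mult_left_mono)
    finally show ?thesis using m_def by (simp add: algebra_simps)
  qed
  have "(\<lambda>m. c ^ m) \<longlonglongrightarrow> 0" by (rule LIMSEQ_power_zero) (use c c0 in simp)
  then have "(\<lambda>k. c ^ (k div N)) \<longlonglongrightarrow> 0" by (rule filterlim_compose[OF _ div_at_top[OF N]])
  then have "(\<lambda>k. A ^ N * e 0 * c ^ (k div N)) \<longlonglongrightarrow> 0" by (rule tendsto_mult_right_zero)
  then show ?thesis
    by (rule Lim_null_comparison[rotated]) (use bound e0 in simp)
qed

lemma exists_eps:
  fixes F :: "real \<Rightarrow> real"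
  assumes Fc: "continuous_on UNIV F" and F0: "\<And>t. F t \<ge> 0"
    and ae: "AE t in lebesgue_on {0..1}. F t \<noteq> 0"
    and int: "integrable (lebesgue_on {0..1}) (\<lambda>t. ln (F t))"
    and neg: "integral\<^sup>L (lebesgue_on {0..1}) (\<lambda>t. ln (F t)) < 0"
  shows "\<exists>\<epsilon>>0. integral\<^sup>L (lebesgue_on {0..1}) (\<lambda>t. ln (F t + \<epsilon>)) < 0"
proof -
  define M where "M = lebesgue_on {0..1::real}"
  define s where "s i t = ln (F t + 1 / real (Suc i))" for i t
  have contl: "continuous_on {0..1} (\<lambda>t. ln (F t + c))" if "c > 0" for c
  proof (rule continuous_on_ln)
    show "continuous_on {0..1} (\<lambda>t. F t + c)" by (intro continuous_intros continuous_on_subset[OF Fc]) auto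
    show "\<forall>x\<in>{0..1}. F x + c \<noteq> 0" using F0 that by (metis add_nonneg_pos less_irrefl)
  qed
  have ms: "s i \<in> borel_measurable M" for i
    unfolding M_def s_def by (rule continuous_imp_measurable_on_sets_lebesgue[OF contl]) auto
  have mf: "(\<lambda>t. ln (F t)) \<in> borel_measurable M" using int M_def by auto
  define w where "w t = \<bar>ln (F t)\<bar> + \<bar>ln (F t + 1)\<bar>" for t
  have iw: "integrable M w"
    unfolding w_def M_def
    by (intro Bochner_Integration.integrable_add integrable_abs int continuous_imp_integrable_real contl) simp
  have lim: "AE t in M. (\<lambda>i. s i t) \<longlonglongrightarrow> ln (F t)"
    using ae unfolding M_def
  proof eventually_elim
    case (elim t)
    then have pos: "F t > 0" using F0[of t] by simp
    have "(\<lambda>i. F t + inverse (real (Suc i))) \<longlonglongrightarrow> F t + 0"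
      by (intro tendsto_intros LIMSEQ_inverse_real_of_nat)
    then have "(\<lambda>i. ln (F t + inverse (real (Suc i)))) \<longlonglongrightarrow> ln (F t)"
      using pos by (intro tendsto_ln) auto
    then show ?case by (simp add: s_def divide_inverse)
  qed
  have bnd: "AE t in M. norm (s i t) \<le> w t" for i
    using ae unfolding M_def
  proof eventually_elim
    case (elim t)
    then have pos: "F t > 0" using F0[of t] by simp
    have "1 / real (Suc i) \<le> 1" by simp
    moreover have "1 / real (Suc i) > 0" by simp
    ultimately have "ln (F t) \<le> s i t" "s i t \<le> ln (F t + 1)"
      unfolding s_def using pos by (auto intro!: ln_mono add_pos_pos simp del: of_nat_Suc)
    then show ?case unfolding w_def by auto
  qed
  have "(\<lambda>i. integral\<^sup>L M (s i)) \<longlonglongrightarrow> integral\<^sup>L M (\<lambda>t. ln (F t))"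
    by (rule integral_dominated_convergence[OF mf ms iw lim bnd])
  from order_tendstoD(2)[OF this neg[folded M_def]]
  obtain i where "integral\<^sup>L M (s i) < 0" by (auto simp: eventually_sequentially)
  then show ?thesis unfolding M_def s_def by (intro exI[of _ "1 / real (Suc i)"]) auto
qed

lemma one_step:
  fixes f f' :: "real \<Rightarrow> complex \<Rightarrow> complex" and \<gamma> :: "real \<Rightarrow> complex"
  assumes der: "\<And>t u. (f t has_field_derivative f' t u) (at u)"
    and f'c: "continuous_on UNIV (\<lambda>x. f' (fst x) (snd x))"
    and fper: "\<And>t. f (t + 1) = f t" and f'per: "\<And>t. f' (t + 1) = f' t"
    and gc: "continuous_on UNIV \<gamma>" and gper: "\<And>t. \<gamma> (t + 1) = \<gamma> t"
    and eps: "\<epsilon> > 0"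
  shows "\<exists>r>0. \<forall>t z. cmod (z - \<gamma> t) \<le> r \<longrightarrow>
            cmod (f t z - f t (\<gamma> t)) \<le> (cmod (f' t (\<gamma> t)) + \<epsilon>) * cmod (z - \<gamma> t)"
proof -
  obtain B where B: "\<And>t. cmod (\<gamma> t) \<le> B" using periodic_bounded[OF gc gper] by auto
  define K where "K = {0..1::real} \<times> cball (0::complex) (B + 1)"
  have "compact K" unfolding K_def by (intro compact_Times compact_Icc compact_cball)
  then have uc: "uniformly_continuous_on K (\<lambda>x. f' (fst x) (snd x))"
    by (intro compact_uniformly_continuous continuous_on_subset[OF f'c]) auto
  obtain r0 where r00: "r0 > 0"
    "\<forall>x\<in>K. \<forall>x'\<in>K. dist x' x < r0 \<longrightarrow> dist (f' (fst x') (snd x')) (f' (fst x) (snd x)) < \<epsilon>"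
    using uc eps unfolding uniformly_continuous_on_def by blast
  have r0: "r0 > 0"
    "\<And>x x'. x \<in> K \<Longrightarrow> x' \<in> K \<Longrightarrow> dist x' x < r0 \<Longrightarrow> dist (f' (fst x') (snd x')) (f' (fst x) (snd x)) < \<epsilon>"
    using r00 by auto
  define r where "r = min (r0/2) 1"
  have r: "r > 0" "r < r0" "r \<le> 1" using r0 r_def by auto
  have main: "cmod (f t z - f t (\<gamma> t)) \<le> (cmod (f' t (\<gamma> t)) + \<epsilon>) * cmod (z - \<gamma> t)"
    if t: "t \<in> {0..1}" and z: "cmod (z - \<gamma> t) \<le> r" for t z
  proof -
    define c where "c = f' t (\<gamma> t)"
    define S where "S = cball (\<gamma> t) r"
    have cS: "convex S" unfolding S_def by simp
    have inK: "(t, u) \<in> K" if "u \<in> S" for u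
    proof -
      have "cmod u \<le> cmod (\<gamma> t) + cmod (u - \<gamma> t)" by (metis add.commute diff_add_cancel norm_triangle_ineq)
      also have "\<dots> \<le> B + 1" using B[of t] that r S_def by (simp add: dist_norm norm_minus_commute)
      finally show ?thesis using t K_def by simp
    qed
    have dn: "norm (f' t u - c) \<le> \<epsilon>" if "u \<in> S" for u
    proof -
      have "dist (t, u) (t, \<gamma> t) < r0"
        using that r S_def by (simp add: dist_Pair_Pair dist_commute)
      then have "dist (f' t u) (f' t (\<gamma> t)) < \<epsilon>"
        using r0(2)[OF inK inK, of "\<gamma> t" u] that S_def r by simp
      then show ?thesis by (simp add: c_def dist_norm)
    qed
    have df: "((\<lambda>u. f t u - c * u) has_field_derivative (f' t u - c)) (at u within S)" for u
    proof -
      have "((\<lambda>u. f t u - c * u) has_field_derivative (f' t u - c * 1)) (at u)"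
        by (rule DERIV_diff[OF der DERIV_cmult[OF DERIV_ident]])
      then show ?thesis by (simp add: has_field_derivative_at_within)
    qed
    have "norm ((f t z - c * z) - (f t (\<gamma> t) - c * \<gamma> t)) \<le> \<epsilon> * norm (z - \<gamma> t)"
      by (rule field_differentiable_bound[OF cS df dn]) (use z S_def r in \<open>auto simp: dist_norm norm_minus_commute\<close>)
    then have 1: "cmod (f t z - f t (\<gamma> t) - c * (z - \<gamma> t)) \<le> \<epsilon> * cmod (z - \<gamma> t)"
      by (simp add: algebra_simps)
    have "cmod (f t z - f t (\<gamma> t)) \<le> cmod (f t z - f t (\<gamma> t) - c * (z - \<gamma> t)) + cmod (c * (z - \<gamma> t))"
      by (metis diff_add_cancel norm_triangle_ineq)
    also have "\<dots> \<le> \<epsilon> * cmod (z - \<gamma> t) + cmod c * cmod (z - \<gamma> t)" using 1 by (simp add: norm_mult)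
    finally show ?thesis by (simp add: c_def algebra_simps)
  qed
  have "cmod (f t z - f t (\<gamma> t)) \<le> (cmod (f' t (\<gamma> t)) + \<epsilon>) * cmod (z - \<gamma> t)"
    if "cmod (z - \<gamma> t) \<le> r" for t z
  proof -
    have e1: "f t = f (frac t)" "f' t = f' (frac t)" "\<gamma> t = \<gamma> (frac t)"
      using periodic_frac[of f, OF fper] periodic_frac[of f', OF f'per] periodic_frac[of \<gamma>, OF gper] by auto
    have "frac t \<in> {0..1}" using frac_lt_1[of t] frac_ge_0[of t] by auto
    then show ?thesis using main[of "frac t" z] that e1 by simp
  qed
  then show ?thesis using r by blast
qed

lemma components_disjoint_balls:
  fixes C :: "'a::real_normed_vector set"
  assumes \<delta>: "\<delta> > 0" and sep: "\<And>c c'. c \<in> C \<Longrightarrow> c' \<in> C \<Longrightarrow> c \<noteq> c' \<Longrightarrow> 2 * \<delta> \<le> dist c c'"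
  shows "components (\<Union>c\<in>C. ball c \<delta>) = (\<lambda>c. ball c \<delta>) ` C"
proof -
  define U where "U = (\<Union>c\<in>C. ball c \<delta>)"
  have disj: "ball c \<delta> \<inter> ball c' \<delta> = {}" if "c \<in> C" "c' \<in> C" "c \<noteq> c'" for c c'
  proof (rule ccontr)
    assume "ball c \<delta> \<inter> ball c' \<delta> \<noteq> {}"
    then obtain z where "dist c z < \<delta>" "dist c' z < \<delta>" by auto
    then have "dist c c' < 2 * \<delta>" using dist_triangle3[of c c' z] by (simp add: dist_commute)
    then show False using sep[OF that] by linarith
  qed
  have cc: "connected_component_set U x = ball c \<delta>" if c: "c \<in> C" and x: "x \<in> ball c \<delta>" for c x
  proof
    show "ball c \<delta> \<subseteq> connected_component_set U x"
      by (rule connected_component_maximal) (use c x U_def in auto)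
  next
    define K where "K = connected_component_set U x"
    define V where "V = (\<Union>c'\<in>C - {c}. ball c' \<delta>)"
    have "connected K" unfolding K_def by simp
    moreover have "open (ball c \<delta>)" "open V" unfolding V_def by auto
    moreover have "ball c \<delta> \<inter> V \<inter> K = {}" unfolding V_def using disj[OF c] by blast
    moreover have "K \<subseteq> ball c \<delta> \<union> V"
      using connected_component_subset[of U x] unfolding K_def U_def V_def by blast
    ultimately have "ball c \<delta> \<inter> K = {} \<or> V \<inter> K = {}" by (rule connectedD)
    moreover have "x \<in> K" unfolding K_def using x c U_def by auto
    ultimately have "V \<inter> K = {}" using x by blast
    then show "connected_component_set U x \<subseteq> ball c \<delta>"
      using \<open>K \<subseteq> ball c \<delta> \<union> V\<close> K_def by blast
  qed
  show ?thesis
    unfolding U_def[symmetric]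
  proof
    show "components U \<subseteq> (\<lambda>c. ball c \<delta>) ` C"
    proof
      fix X assume "X \<in> components U"
      then obtain x where x: "x \<in> U" "X = connected_component_set U x" by (auto simp: components_iff)
      then obtain c where "c \<in> C" "x \<in> ball c \<delta>" using U_def by auto
      then show "X \<in> (\<lambda>c. ball c \<delta>) ` C" using cc x by auto
    qed
  next
    show "(\<lambda>c. ball c \<delta>) ` C \<subseteq> components U"
    proof
      fix X assume "X \<in> (\<lambda>c. ball c \<delta>) ` C"
      then obtain c where c: "c \<in> C" "X = ball c \<delta>" by auto
      have "c \<in> ball c \<delta>" using \<delta> by simp
      then show "X \<in> components U" unfolding components_iff using cc[OF c(1)] c U_def by blast
    qed
  qed
qed

lemma finite_pos_choice:
  fixes P :: "'k \<Rightarrow> 's \<Rightarrow> real"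
  assumes "finite A" "\<And>k. k \<in> A \<Longrightarrow> \<exists>m>0. \<forall>s. m \<le> P k s"
  shows "\<exists>m>0. \<forall>k\<in>A. \<forall>s. m \<le> P k s"
  using assms
proof (induction A rule: finite_induct)
  case empty then show ?case by (intro exI[of _ 1]) auto
next
  case (insert a A)
  then obtain m1 where m1: "m1 > 0" "\<forall>k\<in>A. \<forall>s. m1 \<le> P k s" by auto
  obtain m2 where m2: "m2 > 0" "\<forall>s. m2 \<le> P a s" using insert.prems by auto
  show ?case using m1 m2 by (intro exI[of _ "min m1 m2"]) (auto simp: min_le_iff_disj)
qed

lemma not_Ints_frac:
  fixes k n :: nat
  assumes "0 < k" "k < n"
  shows "real k / real n \<notin> \<int>"
proof
  assume "real k / real n \<in> \<int>"
  then obtain j where j: "real k / real n = of_int j" by (auto elim: Ints_cases)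
  have "0 < real k / real n" "real k / real n < 1" using assms by auto
  then have "0 < j" "j < 1" using j by linarith+
  then show False by simp
qed

lemma sep_exists:
  fixes \<gamma> :: "real \<Rightarrow> complex" and n :: nat
  assumes gc: "continuous_on UNIV \<gamma>" and gper: "\<And>t. \<gamma> (t + 1) = \<gamma> t"
    and ginj: "\<And>s t. \<gamma> s = \<gamma> t \<Longrightarrow> s - t \<in> \<int>"
  shows "\<exists>m>0. \<forall>k\<in>{1..<n}. \<forall>s. m \<le> cmod (\<gamma> s - \<gamma> (s + real k / real n))"
proof (rule finite_pos_choice)
  fix k assume k: "k \<in> {1..<n}"
  define \<psi> where "\<psi> s = cmod (\<gamma> s - \<gamma> (s + real k / real n))" for s
  have "continuous_on {0..1} \<psi>" unfolding \<psi>_def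
    by (intro continuous_intros continuous_on_compose2[OF gc]) auto
  then obtain s0 where s0: "s0 \<in> {0..1}" "\<And>s. s \<in> {0..1} \<Longrightarrow> \<psi> s0 \<le> \<psi> s"
    using continuous_attains_inf[of "{0..1}" \<psi>] by auto
  have pos: "\<psi> s0 > 0"
  proof (rule ccontr)
    assume "\<not> \<psi> s0 > 0"
    then have "\<gamma> s0 = \<gamma> (s0 + real k / real n)" unfolding \<psi>_def by simp
    then have "s0 - (s0 + real k / real n) \<in> \<int>" by (rule ginj)
    then have "- (real k / real n) \<in> \<int>" by simp
    then have "real k / real n \<in> \<int>" using Ints_minus by fastforce
    then show False using not_Ints_frac[of k n] k by auto
  qed
  have "\<psi> s0 \<le> \<psi> s" for s
  proof -
    have "\<psi> s = \<psi> (frac s)" unfolding \<psi>_def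
      using periodic_frac[of \<gamma>, OF gper] periodic_frac[of "\<lambda>s. \<gamma> (s + real k / real n)"] gper
      by (metis (no_types, lifting) add.commute add.left_commute)
    moreover have "frac s \<in> {0..1}" using frac_lt_1[of s] frac_ge_0[of s] by auto
    ultimately show ?thesis using s0 by simp
  qed
  then show "\<exists>m>0. \<forall>s. m \<le> cmod (\<gamma> s - \<gamma> (s + real k / real n))"
    using pos unfolding \<psi>_def by blast
qed simp

lemma fiber_image:
  fixes \<gamma> :: "real \<Rightarrow> complex" and n :: nat
  assumes gper: "\<And>t. \<gamma> (t + 1) = \<gamma> t" and n: "n > 0"
  shows "{\<gamma> t | t. \<theta> - real n * t \<in> \<int>} = (\<lambda>k. \<gamma> ((\<theta> + real k) / real n)) ` {..<n}"
proof
  show "{\<gamma> t | t. \<theta> - real n * t \<in> \<int>} \<subseteq> (\<lambda>k. \<gamma> ((\<theta> + real k) / real n)) ` {..<n}"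
  proof
    fix c assume "c \<in> {\<gamma> t | t. \<theta> - real n * t \<in> \<int>}"
    then obtain t j where c: "c = \<gamma> t" and j: "\<theta> - real n * t = of_int j" by (auto elim!: Ints_cases)
    define k where "k = nat ((-j) mod int n)"
    define q where "q = (-j) div int n"
    have k0: "(-j) mod int n \<ge> 0" using n by simp
    have kn: "k < n" using n k_def by (simp add: nat_less_iff)
    have kk: "real k = of_int ((-j) mod int n)" using k0 k_def by simp
    have "-j = int n * q + (-j) mod int n" using q_def by simp
    then have "of_int (-j) = real n * of_int q + real k" using kk
      by (metis of_int_add of_int_mult of_int_of_nat_eq)
    then have "(\<theta> + real k) / real n = t + of_int (-q)" using j n by (simp add: field_simps)
    then have "\<gamma> ((\<theta> + real k) / real n) = c" using c periodic_int[of \<gamma>, OF gper] by metis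
    then show "c \<in> (\<lambda>k. \<gamma> ((\<theta> + real k) / real n)) ` {..<n}" using kn by force
  qed
next
  show "(\<lambda>k. \<gamma> ((\<theta> + real k) / real n)) ` {..<n} \<subseteq> {\<gamma> t | t. \<theta> - real n * t \<in> \<int>}"
  proof
    fix c assume "c \<in> (\<lambda>k. \<gamma> ((\<theta> + real k) / real n)) ` {..<n}"
    then obtain k where c: "c = \<gamma> ((\<theta> + real k) / real n)" by auto
    have "\<theta> - real n * ((\<theta> + real k) / real n) = - real k" using n by (simp add: field_simps)
    then have "\<theta> - real n * ((\<theta> + real k) / real n) \<in> \<int>" by simp
    then show "c \<in> {\<gamma> t | t. \<theta> - real n * t \<in> \<int>}" using c by blast
  qed
qed

lemma fiber_inj:
  fixes \<gamma> :: "real \<Rightarrow> complex" and n :: nat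
  assumes ginj: "\<And>s t. \<gamma> s = \<gamma> t \<Longrightarrow> s - t \<in> \<int>" and n: "n > 0"
  shows "inj_on (\<lambda>k. \<gamma> ((\<theta> + real k) / real n)) {..<n}"
proof -
  have *: "False" if "k' < k" "k < n" "\<gamma> ((\<theta> + real k) / real n) = \<gamma> ((\<theta> + real k') / real n)" for k k'
  proof -
    have "(\<theta> + real k) / real n - (\<theta> + real k') / real n \<in> \<int>" using ginj that(3) by blast
    moreover have "(\<theta> + real k) / real n - (\<theta> + real k') / real n = real (k - k') / real n"
      using that n by (simp add: field_simps of_nat_diff)
    moreover have "real (k - k') / real n \<notin> \<int>" using not_Ints_frac[of "k - k'" n] that by simp
    ultimately show False by simp
  qed
  show ?thesis unfolding inj_on_def
    by (metis * lessThan_iff nat_neq_iff)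
qed

lemma fiber_sep:
  fixes \<gamma> :: "real \<Rightarrow> complex" and n :: nat
  assumes gper: "\<And>t. \<gamma> (t + 1) = \<gamma> t" and n: "n > 0"
    and m: "\<forall>k\<in>{1..<n}. \<forall>s. m \<le> cmod (\<gamma> s - \<gamma> (s + real k / real n))"
    and t: "\<theta> - real n * t \<in> \<int>" and t': "\<theta> - real n * t' \<in> \<int>" and ne: "\<gamma> t \<noteq> \<gamma> t'"
  shows "m \<le> cmod (\<gamma> t - \<gamma> t')"
proof -
  obtain j where j: "\<theta> - real n * t = of_int j" using t by (auto elim!: Ints_cases)
  obtain j' where j': "\<theta> - real n * t' = of_int j'" using t' by (auto elim!: Ints_cases)
  define J where "J = j - j'"
  define k where "k = nat (J mod int n)"
  define q where "q = J div int n"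
  have k0: "J mod int n \<ge> 0" using n by simp
  have kn: "k < n" using n k_def by (simp add: nat_less_iff)
  have kk: "real k = of_int (J mod int n)" using k0 k_def by simp
  have "J = int n * q + J mod int n" using q_def by simp
  then have "of_int J = real n * of_int q + real k" using kk
    by (metis of_int_add of_int_mult of_int_of_nat_eq)
  moreover have "real n * (t' - t) = of_int J" using j j' J_def by (simp add: algebra_simps)
  ultimately have "t' = (t + real k / real n) + of_int q" using n by (simp add: field_simps)
  then have gt': "\<gamma> t' = \<gamma> (t + real k / real n)" using periodic_int[of \<gamma>, OF gper] by metis
  have "k \<noteq> 0"
  proof
    assume "k = 0"
    then show False using gt' ne by simp
  qed
  then have "k \<in> {1..<n}" using kn by simp
  then show ?thesis using m gt' by auto
qed

theorem mainTheorem4: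
  fixes \<alpha> :: real and p :: "real \<Rightarrow> complex poly" and n :: nat
    and \<Gamma> :: "(real \<times> complex) set"
  assumes "fibred_poly_dynamics \<alpha> p"
    and "attracting_invariant_ncurve \<alpha> p n \<Gamma>"
  shows "\<exists>\<T> :: (real \<times> complex) set.
           open \<T> \<and> (\<forall>\<theta> z. (\<theta>, z) \<in> \<T> \<longleftrightarrow> (\<theta> + 1, z) \<in> \<T>) \<and> \<Gamma> \<subseteq> \<T> \<and>
           (\<forall>x\<in>\<T>. ((\<lambda>k. infdist ((fibred_map \<alpha> p ^^ k) x) \<Gamma>) \<longlongrightarrow> 0) sequentially) \<and>
           (\<forall>\<theta>. card (components {z. (\<theta>, z) \<in> \<T>}) = n \<and>
                 (\<forall>C\<in>components {z. (\<theta>, z) \<in> \<T>}. \<exists>z\<in>C. (\<theta>, z) \<in> \<Gamma>))"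
proof -
  from assms(1) have irr: "\<alpha> \<notin> \<rat>" and pper: "\<And>\<theta>. p (\<theta> + 1) = p \<theta>"
    and dgb: "\<exists>d. \<forall>\<theta>. degree (p \<theta>) \<le> d" and pco: "\<And>i. continuous_on UNIV (\<lambda>\<theta>. coeff (p \<theta>) i)"
    unfolding fibred_poly_dynamics_def by auto
  obtain d where dg: "\<And>\<theta>. degree (p \<theta>) \<le> d" using dgb by auto
  from assms(2) obtain \<gamma> \<tau> where n1: "n \<ge> 1" and unf: "is_unfolding \<gamma>" and Gam: "\<Gamma> = ncurve n \<gamma>"
    and \<tau>: "\<tau> < n"
    and inv: "\<And>t. poly (p (frac (real n * t))) (\<gamma> t) = \<gamma> (t + (\<alpha> + real \<tau>) / real n)"
    and ae: "AE t in lebesgue_on {0..1}. poly (pderiv (p (frac (real n * t)))) (\<gamma> t) \<noteq> 0"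
    and intg: "integrable (lebesgue_on {0..1}) (\<lambda>t. ln (cmod (poly (pderiv (p (frac (real n * t)))) (\<gamma> t))))"
    and lyap: "exp (integral\<^sup>L (lebesgue_on {0..1}) (\<lambda>t. ln (cmod (poly (pderiv (p (frac (real n * t)))) (\<gamma> t))))) < 1"
    unfolding attracting_invariant_ncurve_def by blast
  from unf have gc: "continuous_on UNIV \<gamma>" and gper: "\<And>t. \<gamma> (t + 1) = \<gamma> t"
    and ginj: "\<And>s t. \<gamma> s = \<gamma> t \<Longrightarrow> s - t \<in> \<int>"
    unfolding is_unfolding_def by auto
  have n0: "n > 0" using n1 by simp
  define Q where "Q t = p (real n * t)" for t
  have Qfrac: "p (frac (real n * t)) = Q t" for t using periodic_frac[of p, OF pper] Q_def by simp
  have pQ: "p x = Q t" if "x - real n * t \<in> \<int>" for x t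
  proof -
    have "p (real n * t + (x - real n * t)) = p (real n * t)" by (rule periodic_Ints[of p, OF pper that])
    then show ?thesis using Q_def by simp
  qed
  have Qper: "Q (t + 1) = Q t" for t
  proof -
    have "real n * (t + 1) - real n * t \<in> \<int>" by (simp add: algebra_simps)
    then show ?thesis using pQ by (simp add: Q_def)
  qed
  define \<omega> where "\<omega> = (\<alpha> + real \<tau>) / real n"
  have n\<omega>: "real n * \<omega> = \<alpha> + real \<tau>" using n0 by (simp add: \<omega>_def)
  have irr\<omega>: "\<omega> \<notin> \<rat>"
  proof
    assume "\<omega> \<in> \<rat>"
    then have "real n * \<omega> - real \<tau> \<in> \<rat>" by simp
    then show False using irr n\<omega> by simp
  qed
  have inv': "poly (Q t) (\<gamma> t) = \<gamma> (t + \<omega>)" for t using inv[of t] Qfrac \<omega>_def by simp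
  define f where "f t = poly (Q t)" for t
  define f' where "f' t = poly (pderiv (Q t))" for t
  have Qco: "continuous_on UNIV (\<lambda>t. coeff (Q t) i)" for i
    unfolding Q_def by (rule continuous_on_compose2[OF pco[of i]]) (auto intro!: continuous_intros)
  have Qdg: "degree (Q t) \<le> d" for t using dg Q_def by simp
  have f'c: "continuous_on UNIV (\<lambda>x. f' (fst x) (snd x))"
    using pderiv_joint_cont[OF Qco Qdg] f'_def by simp
  have der: "(f t has_field_derivative f' t u) (at u)" for t u
    unfolding f_def f'_def using poly_DERIV[of "Q t" u] by simp
  have fper: "f (t + 1) = f t" for t using Qper f_def by simp
  have f'per: "f' (t + 1) = f' t" for t using Qper f'_def by simp
  define F where "F t = cmod (f' t (\<gamma> t))" for t
  have Fc: "continuous_on UNIV F"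
  proof -
    have "continuous_on UNIV (\<lambda>t. f' (fst (t, \<gamma> t)) (snd (t, \<gamma> t)))"
      by (rule continuous_on_compose2[OF f'c]) (auto intro!: continuous_intros gc)
    then show ?thesis unfolding F_def by (auto intro!: continuous_intros)
  qed
  have F0: "F t \<ge> 0" for t by (simp add: F_def)
  have Fper: "F (t + 1) = F t" for t by (simp add: F_def f'per gper)
  have Feq: "cmod (poly (pderiv (p (frac (real n * t)))) (\<gamma> t)) = F t" for t
    by (simp add: F_def f'_def Qfrac)
  have aeF: "AE t in lebesgue_on {0..1}. F t \<noteq> 0"
    using ae by eventually_elim (simp add: Feq[symmetric])
  have intF: "integrable (lebesgue_on {0..1}) (\<lambda>t. ln (F t))" using intg Feq by simp
  have negF: "integral\<^sup>L (lebesgue_on {0..1}) (\<lambda>t. ln (F t)) < 0"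
    using lyap Feq by simp
  obtain \<epsilon> where \<epsilon>: "\<epsilon> > 0" "integral\<^sup>L (lebesgue_on {0..1}) (\<lambda>t. ln (F t + \<epsilon>)) < 0"
    using exists_eps[OF Fc F0 aeF intF negF] by blast
  define J where "J = integral\<^sup>L (lebesgue_on {0..1}) (\<lambda>t. ln (F t + \<epsilon>))"
  have J: "J < 0" using \<epsilon> J_def by simp
  have contl: "continuous_on S (\<lambda>t. ln (F t + \<epsilon>))" for S
  proof (rule continuous_on_ln)
    show "continuous_on S (\<lambda>t. F t + \<epsilon>)" by (intro continuous_intros continuous_on_subset[OF Fc]) auto
    show "\<forall>x\<in>S. F x + \<epsilon> \<noteq> 0" using F0 \<epsilon> by (metis add_nonneg_pos less_irrefl)
  qed
  define G where "G t = ln (F t + \<epsilon>) - J / 2" for t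
  have Gc: "continuous_on UNIV G" unfolding G_def by (intro continuous_intros contl)
  have Gper: "G (t + 1) = G t" for t by (simp add: G_def Fper)
  have GI: "integral {0..1} G < 0"
  proof -
    have "integral {0..1} (\<lambda>t. ln (F t + \<epsilon>)) = J"
      unfolding J_def by (rule lebesgue_integral_eq_integral[symmetric]) (auto intro!: continuous_imp_integrable_real contl)
    moreover have "integral {0..1} G = integral {0..1} (\<lambda>t. ln (F t + \<epsilon>)) - J / 2"
    proof -
      have ic: "(\<lambda>t::real. J / 2) integrable_on {0..1::real}" by (rule integrable_continuous_interval) simp
      have "integral {0..1} G = integral {0..1} (\<lambda>t. ln (F t + \<epsilon>)) - integral {0..1} (\<lambda>t::real. J / 2)"
        unfolding G_def
        by (rule Henstock_Kurzweil_Integration.integral_diff[OF integrable_continuous_interval[OF contl[of "{0..1}"]] ic])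
      then show ?thesis by simp
    qed
    ultimately show ?thesis using J by simp
  qed
  obtain N where N: "N > 0" and sumG: "\<And>t. (\<Sum>k<N. G (t + real k * \<omega>)) < 0"
    using birkhoff_neg[OF Gc Gper irr\<omega> GI] by blast
  define c where "c = exp (real N * J / 2)"
  have c1: "c < 1" using N J c_def by (simp add: mult_pos_neg)
  have prodc: "(\<Prod>k<N. F (t + real k * \<omega>) + \<epsilon>) \<le> c" for t
  proof -
    have "(\<Sum>k<N. G (t + real k * \<omega>)) = (\<Sum>k<N. ln (F (t + real k * \<omega>) + \<epsilon>)) - real N * J / 2"
      by (simp add: G_def sum_subtractf)
    then have s: "(\<Sum>k<N. ln (F (t + real k * \<omega>) + \<epsilon>)) < real N * J / 2" using sumG[of t] by simp
    have "(\<Prod>k<N. F (t + real k * \<omega>) + \<epsilon>) = (\<Prod>k<N. exp (ln (F (t + real k * \<omega>) + \<epsilon>)))"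
      using F0 \<epsilon> by (intro prod.cong refl) (simp add: add_nonneg_pos)
    also have "\<dots> = exp (\<Sum>k<N. ln (F (t + real k * \<omega>) + \<epsilon>))" by (simp add: exp_sum)
    also have "\<dots> \<le> c" unfolding c_def using s by simp
    finally show ?thesis .
  qed
  obtain r where r: "r > 0" and os: "\<And>t z. cmod (z - \<gamma> t) \<le> r \<Longrightarrow>
            cmod (f t z - f t (\<gamma> t)) \<le> (cmod (f' t (\<gamma> t)) + \<epsilon>) * cmod (z - \<gamma> t)"
    using one_step[OF der f'c fper f'per gc gper \<epsilon>(1)] by blast
  obtain MF where MF: "\<And>t. norm (F t) \<le> MF" using periodic_bounded[OF Fc Fper] by blast
  define A where "A = MF + \<epsilon> + 1"
  have MF0: "MF \<ge> 0" using MF[of 0] by (meson norm_ge_zero order_trans)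
  have A1: "A \<ge> 1" using MF0 \<epsilon> A_def by simp
  obtain sep where sep: "sep > 0" "\<forall>k\<in>{1..<n}. \<forall>s. sep \<le> cmod (\<gamma> s - \<gamma> (s + real k / real n))"
    using sep_exists[OF gc gper ginj, of n] by blast
  define \<delta> where "\<delta> = min (r / A ^ N) (sep / 2)"
  have \<delta>: "\<delta> > 0" "\<delta> \<le> r / A ^ N" "2 * \<delta> \<le> sep" using r A1 sep \<delta>_def by auto
  define T where "T = {(x, z). \<exists>t. x - real n * t \<in> \<int> \<and> cmod (z - \<gamma> t) < \<delta>}"
  have memT: "(x, z) \<in> T \<longleftrightarrow> (\<exists>j::int. cmod (z - \<gamma> ((x - of_int j) / real n)) < \<delta>)" for x z
  proof
    assume "(x, z) \<in> T"
    then obtain t where t: "x - real n * t \<in> \<int>" "cmod (z - \<gamma> t) < \<delta>" unfolding T_def by auto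
    then obtain j where j: "x - real n * t = of_int j" by (auto elim!: Ints_cases)
    then have "t = (x - of_int j) / real n" using n0 by (simp add: field_simps)
    then show "\<exists>j::int. cmod (z - \<gamma> ((x - of_int j) / real n)) < \<delta>" using t by blast
  next
    assume "\<exists>j::int. cmod (z - \<gamma> ((x - of_int j) / real n)) < \<delta>"
    then obtain j :: int where j: "cmod (z - \<gamma> ((x - of_int j) / real n)) < \<delta>" by blast
    have "x - real n * ((x - of_int j) / real n) = of_int j" using n0 by (simp add: field_simps)
    then have "x - real n * ((x - of_int j) / real n) \<in> \<int>" by simp
    then show "(x, z) \<in> T" unfolding T_def using j by blast
  qed
  have openT: "open T"
  proof -
    define S where "S j = (\<lambda>y. cmod (snd y - \<gamma> ((fst y - of_int j) / real n))) -` {..<\<delta>}" for j :: int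
    have "T = (\<Union>j. S j)"
    proof (rule set_eqI)
      fix y :: "real \<times> complex"
      show "y \<in> T \<longleftrightarrow> y \<in> (\<Union>j. S j)"
        using memT[of "fst y" "snd y"] by (simp add: S_def)
    qed
    moreover have "open (S j)" for j
    proof -
      have "continuous_on UNIV (\<lambda>y::real\<times>complex. cmod (snd y - \<gamma> ((fst y - of_int j) / real n)))"
        by (intro continuous_intros continuous_on_compose2[OF gc]) (use n0 in simp_all)
      then have "\<forall>B. open B \<longrightarrow> open ((\<lambda>y. cmod (snd y - \<gamma> ((fst y - of_int j) / real n))) -` B \<inter> UNIV)"
        by (rule continuous_on_open_vimage[OF open_UNIV, THEN iffD1])
      then have "open ((\<lambda>y. cmod (snd y - \<gamma> ((fst y - of_int j) / real n))) -` {..<\<delta>} \<inter> UNIV)"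
        using open_lessThan by blast
      then show ?thesis by (simp add: S_def)
    qed
    ultimately show ?thesis by auto
  qed
  have perT: "(\<theta>, z) \<in> T \<longleftrightarrow> (\<theta> + 1, z) \<in> T" for \<theta> z
  proof
    assume "(\<theta>, z) \<in> T"
    then obtain j :: int where j: "cmod (z - \<gamma> ((\<theta> - of_int j) / real n)) < \<delta>" using memT by blast
    have "\<theta> + 1 - of_int (j + 1) = \<theta> - of_int j" by simp
    then have "cmod (z - \<gamma> ((\<theta> + 1 - of_int (j + 1)) / real n)) < \<delta>" using j by simp
    then have "\<exists>j::int. cmod (z - \<gamma> ((\<theta> + 1 - of_int j) / real n)) < \<delta>" by (rule exI)
    then show "(\<theta> + 1, z) \<in> T" by (rule memT[THEN iffD2])
  next
    assume "(\<theta> + 1, z) \<in> T"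
    then obtain j :: int where j: "cmod (z - \<gamma> ((\<theta> + 1 - of_int j) / real n)) < \<delta>" using memT by blast
    have "\<theta> + 1 - of_int j = \<theta> - of_int (j - 1)" by simp
    then have "cmod (z - \<gamma> ((\<theta> - of_int (j - 1)) / real n)) < \<delta>" using j by (metis)
    then have "\<exists>j::int. cmod (z - \<gamma> ((\<theta> - of_int j) / real n)) < \<delta>" by (rule exI)
    then show "(\<theta>, z) \<in> T" by (rule memT[THEN iffD2])
  qed
  have GT: "\<Gamma> \<subseteq> T"
  proof
    fix y assume "y \<in> \<Gamma>"
    then obtain x t where "y = (x, \<gamma> t)" "x - real n * t \<in> \<int>" using Gam ncurve_def by auto
    then show "y \<in> T" unfolding T_def using \<delta> by auto
  qed
  have attr: "((\<lambda>k. infdist ((fibred_map \<alpha> p ^^ k) y) \<Gamma>) \<longlongrightarrow> 0) sequentially" if yT: "y \<in> T" for y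
  proof -
    obtain x z where y: "y = (x, z)" by fastforce
    then obtain t0 where t0: "x - real n * t0 \<in> \<int>" "cmod (z - \<gamma> t0) < \<delta>" using yT T_def by auto
    define \<Phi> where "\<Phi> = fibred_map \<alpha> p"
    have fstP: "fst ((\<Phi> ^^ k) y) = x + real k * \<alpha>" for k
      by (induction k) (simp_all add: \<Phi>_def fibred_map_def y algebra_simps)
    have sndP: "snd ((\<Phi> ^^ Suc k) y) = poly (p (fst ((\<Phi> ^^ k) y))) (snd ((\<Phi> ^^ k) y))" for k
      by (simp add: \<Phi>_def fibred_map_def)
    define tk where "tk k = t0 + real k * \<omega>" for k
    have inZ: "fst ((\<Phi> ^^ k) y) - real n * tk k \<in> \<int>" for k
    proof -
      have "real n * tk k = real n * t0 + real k * (real n * \<omega>)" by (simp add: tk_def algebra_simps)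
      also have "\<dots> = real n * t0 + real k * (\<alpha> + real \<tau>)" using n\<omega> by simp
      finally have "fst ((\<Phi> ^^ k) y) - real n * tk k = (x - real n * t0) - of_int (int k * int \<tau>)"
        by (simp add: fstP algebra_simps)
      then show ?thesis using t0(1) by simp
    qed
    define e where "e k = cmod (snd ((\<Phi> ^^ k) y) - \<gamma> (tk k))" for k
    define a where "a k = F (tk k) + \<epsilon>" for k
    have step: "e (Suc k) \<le> a k * e k" if "e k \<le> r" for k
    proof -
      have "snd ((\<Phi> ^^ Suc k) y) = f (tk k) (snd ((\<Phi> ^^ k) y))"
        using sndP pQ[OF inZ[of k]] f_def by simp
      moreover have "\<gamma> (tk (Suc k)) = f (tk k) (\<gamma> (tk k))"
        using inv'[of "tk k"] f_def by (simp add: tk_def algebra_simps)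
      ultimately have "e (Suc k) = cmod (f (tk k) (snd ((\<Phi> ^^ k) y)) - f (tk k) (\<gamma> (tk k)))"
        by (simp add: e_def)
      also have "\<dots> \<le> (cmod (f' (tk k) (\<gamma> (tk k))) + \<epsilon>) * cmod (snd ((\<Phi> ^^ k) y) - \<gamma> (tk k))"
        by (rule os) (use that e_def in simp)
      finally show ?thesis by (simp add: a_def e_def F_def)
    qed
    have prod: "(\<Prod>k<N. a (j + k)) \<le> c" for j
    proof -
      have "(\<Prod>k<N. a (j + k)) = (\<Prod>k<N. F (tk j + real k * \<omega>) + \<epsilon>)"
        by (simp add: a_def tk_def algebra_simps)
      then show ?thesis using prodc[of "tk j"] by simp
    qed
    have aA: "a k \<le> A" for k using MF[of "tk k"] by (simp add: a_def A_def)
    have a0: "a k \<ge> 0" for k using F0[of "tk k"] \<epsilon> by (simp add: a_def)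
    have e0: "e k \<ge> 0" for k by (simp add: e_def)
    have init: "e 0 \<le> r / A ^ N" using t0 \<delta> by (simp add: e_def tk_def y)
    have lim: "e \<longlonglongrightarrow> 0"
      by (rule contraction_seq[OF e0 a0 aA A1 N c1 prod step init])
    have le: "infdist ((\<Phi> ^^ k) y) \<Gamma> \<le> e k" for k
    proof -
      have mem: "(fst ((\<Phi> ^^ k) y), \<gamma> (tk k)) \<in> \<Gamma>" using inZ[of k] Gam ncurve_def by auto
      have "infdist ((\<Phi> ^^ k) y) \<Gamma> \<le> dist ((\<Phi> ^^ k) y) (fst ((\<Phi> ^^ k) y), \<gamma> (tk k))"
        by (rule infdist_le[OF mem])
      also have "\<dots> = e k"
      proof -
        obtain u v where w: "(\<Phi> ^^ k) y = (u, v)" by fastforce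
        have "dist (u, v) (u, \<gamma> (tk k)) = dist v (\<gamma> (tk k))" by (simp add: dist_Pair_Pair)
        then show ?thesis using w by (simp add: e_def dist_norm)
      qed
      finally show ?thesis .
    qed
    show ?thesis unfolding \<Phi>_def[symmetric]
    proof (rule Lim_null_comparison[OF _ lim])
      have "\<bar>infdist ((\<Phi> ^^ k) y) \<Gamma>\<bar> \<le> e k" for k using le[of k] infdist_nonneg[of "(\<Phi> ^^ k) y" \<Gamma>] by simp
      then show "\<forall>\<^sub>F k in sequentially. norm (infdist ((\<Phi> ^^ k) y) \<Gamma>) \<le> e k" by simp
    qed
  qed
  have comp: "card (components {z. (\<theta>, z) \<in> T}) = n \<and>
      (\<forall>X\<in>components {z. (\<theta>, z) \<in> T}. \<exists>z\<in>X. (\<theta>, z) \<in> \<Gamma>)" for \<theta>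
  proof -
    define C where "C = {\<gamma> t | t. \<theta> - real n * t \<in> \<int>}"
    have V: "{z. (\<theta>, z) \<in> T} = (\<Union>c\<in>C. ball c \<delta>)"
    proof (rule set_eqI)
      fix z
      show "z \<in> {z. (\<theta>, z) \<in> T} \<longleftrightarrow> z \<in> (\<Union>c\<in>C. ball c \<delta>)"
      proof
        assume "z \<in> {z. (\<theta>, z) \<in> T}"
        then obtain t where "\<theta> - real n * t \<in> \<int>" "cmod (z - \<gamma> t) < \<delta>" unfolding T_def by auto
        then show "z \<in> (\<Union>c\<in>C. ball c \<delta>)" unfolding C_def
          by (auto simp: dist_norm norm_minus_commute)
      next
        assume "z \<in> (\<Union>c\<in>C. ball c \<delta>)"
        then obtain t where "\<theta> - real n * t \<in> \<int>" "dist (\<gamma> t) z < \<delta>" unfolding C_def by auto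
        then show "z \<in> {z. (\<theta>, z) \<in> T}" unfolding T_def
          by (auto simp: dist_norm norm_minus_commute)
      qed
    qed
    have sepC: "2 * \<delta> \<le> dist c c'" if cC: "c \<in> C" "c' \<in> C" "c \<noteq> c'" for c c'
    proof -
      obtain t t' where t: "c = \<gamma> t" "\<theta> - real n * t \<in> \<int>" and t': "c' = \<gamma> t'" "\<theta> - real n * t' \<in> \<int>"
        using cC(1,2) C_def by auto
      have "sep \<le> cmod (\<gamma> t - \<gamma> t')"
        by (rule fiber_sep[of \<gamma>, OF gper n0 sep(2) t(2) t'(2)]) (use cC t t' in simp)
      then show ?thesis using \<delta> t t' by (simp add: dist_norm)
    qed
    have comps: "components {z. (\<theta>, z) \<in> T} = (\<lambda>c. ball c \<delta>) ` C"
      unfolding V by (rule components_disjoint_balls[OF \<delta>(1) sepC])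
    have injb: "inj_on (\<lambda>c. ball c \<delta>) C"
    proof (rule inj_onI)
      fix c c' assume cc: "c \<in> C" "c' \<in> C" "ball c \<delta> = ball c' \<delta>"
      show "c = c'"
      proof (rule ccontr)
        assume ne: "c \<noteq> c'"
        have "c \<in> ball c' \<delta>" using cc(3) \<delta>(1) by (metis centre_in_ball)
        then have "dist c' c < \<delta>" by simp
        then show False using sepC[OF cc(1,2) ne] \<delta>(1) by (simp add: dist_commute)
      qed
    qed
    have cardC: "card C = n"
      unfolding C_def fiber_image[of \<gamma>, OF gper n0] using card_image[OF fiber_inj[OF ginj n0]] by simp
    have "card (components {z. (\<theta>, z) \<in> T}) = n"
      unfolding comps using card_image[OF injb] cardC by simp
    moreover have "\<exists>z\<in>X. (\<theta>, z) \<in> \<Gamma>" if "X \<in> components {z. (\<theta>, z) \<in> T}" for X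
    proof -
      obtain c where c: "c \<in> C" "X = ball c \<delta>" using \<open>X \<in> components {z. (\<theta>, z) \<in> T}\<close> comps by auto
      then obtain t where t: "c = \<gamma> t" "\<theta> - real n * t \<in> \<int>" using C_def by auto
      have "(\<theta>, c) \<in> \<Gamma>" using t Gam ncurve_def by auto
      moreover have "c \<in> X" using c \<delta>(1) by simp
      ultimately show ?thesis by blast
    qed
    ultimately show ?thesis by blast
  qed
  show ?thesis
    apply (rule exI[of _ T])
    using openT perT GT attr comp by blast
qed

end
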